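(* Let $P$ be a poset on $[n]$ whose labeling is natural, and let $x_1,\dots,x_n$ be strictly positive reals. The continuous time Markov chain given by the uniform promotion graph of $P$ has the uniform stationary distribution; that is, with $M$ its transition matrix, $\sum_{\pi\in\mathcal{L}(P)}M(\pi',\pi)=0$ for every $\pi'\in\mathcal{L}(P)$.
   Context: Linear extensions: $\mathcal{L}(P)=\{\pi\in S_n : i\prec j \text{ in } P \Rightarrow \pi^{-1}_i<\pi^{-1}_j\}$, in one-line notation $\pi=\pi_1\cdots\pi_n$. For $1\le i<n$, $\pi\tau_i$ swaps $\pi_i,\pi_{i+1}$ if they are incomparable in $P$ and is $\pi$ otherwise; operators act on the right, $\pi(\sigma\tau)=(\pi\sigma)\tau$. Extended promotion: $\partial_j=\tau_j\tau_{j+1}\cdots\tau_{n-1}$, $1\le j\le n$. Uniform promotion graph: vertex set $\mathcal{L}(P)$, and for each $\pi$ and $j\in[n]$ a directed edge $\pi\to\pi\partial_j$ of weight $x_j$. Transition matrix $M$: for $\pi'\ne\pi$, $M(\pi',\pi)$ is the sum of weights of edges $\pi\to\pi'$; $M(\pi,\pi)$ is minus the sum of weights of edges $\pi\to\pi'$ with $\pi'\ne\pi$. *)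

theory Defs
  imports Complex_Main
begin

text \<open>Permutations in one-line notation are lists; position i (1-indexed) is list index i-1.\<close>

definition natural_poset :: "nat \<Rightarrow> nat rel \<Rightarrow> bool" where
  "natural_poset n R \<longleftrightarrow> partial_order_on {1..n} R \<and> (\<forall>i j. (i, j) \<in> R \<longrightarrow> i \<le> j)"

definition lin_ext :: "nat \<Rightarrow> nat rel \<Rightarrow> nat list set" where
  "lin_ext n R = {\<pi>. distinct \<pi> \<and> set \<pi> = {1..n} \<and>
     (\<forall>a < length \<pi>. \<forall>b < length \<pi>. (\<pi> ! a, \<pi> ! b) \<in> R \<and> \<pi> ! a \<noteq> \<pi> ! b \<longrightarrow> a < b)}"

definition tau :: "nat rel \<Rightarrow> nat \<Rightarrow> nat list \<Rightarrow> nat list" where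
  "tau R i \<pi> = (let a = \<pi> ! (i - 1); b = \<pi> ! i in
     if (a, b) \<notin> R \<and> (b, a) \<notin> R then \<pi>[i - 1 := b, i := a] else \<pi>)"

text \<open>\<pi>\<partial>_j = \<pi>\<tau>_j\<tau>_{j+1}\<dots>\<tau>_{n-1} (operators act on the right).\<close>
definition ext_promo :: "nat \<Rightarrow> nat rel \<Rightarrow> nat \<Rightarrow> nat list \<Rightarrow> nat list" where
  "ext_promo n R j \<pi> = foldl (\<lambda>\<sigma> i. tau R i \<sigma>) \<pi> [j..<n]"

text \<open>Transition matrix of the uniform promotion graph: for each \<pi> and j \<in> [n] an edge
  \<pi> \<rightarrow> \<pi>\<partial>_j of weight x_j.\<close>
definition trans_matrix :: "nat \<Rightarrow> nat rel \<Rightarrow> (nat \<Rightarrow> real) \<Rightarrow> nat list \<Rightarrow> nat list \<Rightarrow> real" where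
  "trans_matrix n R x \<pi>' \<pi> =
     (if \<pi>' \<noteq> \<pi> then (\<Sum>j \<in> {j \<in> {1..n}. ext_promo n R j \<pi> = \<pi>'}. x j)
      else - (\<Sum>j \<in> {j \<in> {1..n}. ext_promo n R j \<pi> \<noteq> \<pi>}. x j))"

end

theory Submission
  imports Defs
begin

lemma lin_ext_length: "\<pi> \<in> lin_ext n R \<Longrightarrow> length \<pi> = n"
proof -
  assume "\<pi> \<in> lin_ext n R"
  then have "distinct \<pi>" "set \<pi> = {1..n}" unfolding lin_ext_def by auto
  then have "length \<pi> = card {1..n}" using distinct_card by metis
  then show ?thesis by simp
qed

lemma tau_invol:
  assumes "1 \<le> i" "i < length \<pi>"
  shows "tau R i (tau R i \<pi>) = \<pi>"
proof (cases "(\<pi> ! (i - 1), \<pi> ! i) \<notin> R \<and> (\<pi> ! i, \<pi> ! (i - 1)) \<notin> R")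
  case True
  have i1: "i - 1 < length \<pi>" "i - 1 \<noteq> i" using assms by auto
  let ?s = "\<pi>[i - 1 := \<pi> ! i, i := \<pi> ! (i - 1)]"
  have a: "?s ! (i - 1) = \<pi> ! i" "?s ! i = \<pi> ! (i - 1)" using i1 assms by (simp_all add: nth_list_update)
  have "tau R i \<pi> = ?s" using True unfolding tau_def Let_def by simp
  moreover have "tau R i ?s = ?s[i - 1 := \<pi> ! (i - 1), i := \<pi> ! i]" using True a unfolding tau_def Let_def by auto
  moreover have "?s[i - 1 := \<pi> ! (i - 1), i := \<pi> ! i] = \<pi>"
    using i1 assms by (metis list_update_id list_update_overwrite list_update_swap)
  ultimately show ?thesis by simp
next
  case False
  then show ?thesis unfolding tau_def Let_def by auto
qed

lemma tau_pres:
  assumes L: "\<pi> \<in> lin_ext n R" and i: "1 \<le> i" "i < n"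
  shows "tau R i \<pi> \<in> lin_ext n R"
proof (cases "(\<pi> ! (i - 1), \<pi> ! i) \<notin> R \<and> (\<pi> ! i, \<pi> ! (i - 1)) \<notin> R")
  case False
  then show ?thesis using L unfolding tau_def Let_def by auto
next
  case True
  have len: "length \<pi> = n" using lin_ext_length[OF L] .
  define \<pi>' where "\<pi>' = \<pi>[i - 1 := \<pi> ! i, i := \<pi> ! (i - 1)]"
  have eq: "tau R i \<pi> = \<pi>'" using True unfolding tau_def Let_def \<pi>'_def by simp
  have d: "distinct \<pi>" and s: "set \<pi> = {1..n}"
    and o: "\<forall>a < length \<pi>. \<forall>b < length \<pi>. (\<pi> ! a, \<pi> ! b) \<in> R \<and> \<pi> ! a \<noteq> \<pi> ! b \<longrightarrow> a < b"
    using L unfolding lin_ext_def by auto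
  have d': "distinct \<pi>'" unfolding \<pi>'_def using d i len by (simp add: distinct_swap)
  have s': "set \<pi>' = {1..n}" unfolding \<pi>'_def using s i len by (simp add: set_swap)
  have len': "length \<pi>' = n" unfolding \<pi>'_def using len by simp
  define sw where "sw k = (if k = i then i - 1 else if k = i - 1 then i else k)" for k
  have nth': "\<pi>' ! p = \<pi> ! sw p" if "p < n" for p
    unfolding \<pi>'_def sw_def using i len that by (auto simp: nth_list_update)
  have swn: "sw p < n" if "p < n" for p unfolding sw_def using that i by auto
  have o': "\<forall>a < length \<pi>'. \<forall>b < length \<pi>'. (\<pi>' ! a, \<pi>' ! b) \<in> R \<and> \<pi>' ! a \<noteq> \<pi>' ! b \<longrightarrow> a < b"
  proof (intro allI impI)
    fix a b assume a: "a < length \<pi>'" and b: "b < length \<pi>'" and h: "(\<pi>' ! a, \<pi>' ! b) \<in> R \<and> \<pi>' ! a \<noteq> \<pi>' ! b"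
    have a': "a < n" and b': "b < n" using a b len' by auto
    have h': "(\<pi> ! sw a, \<pi> ! sw b) \<in> R \<and> \<pi> ! sw a \<noteq> \<pi> ! sw b"
      using h nth'[OF a'] nth'[OF b'] by simp
    have lt: "sw a < sw b" using o swn[OF a'] swn[OF b'] len h' by blast
    have nab: "\<not> (a = i \<and> b = i - 1)"
    proof
      assume ab: "a = i \<and> b = i - 1"
      then have "sw a = i - 1" "sw b = i" unfolding sw_def using i by auto
      then show False using h' True by simp
    qed
    show "a < b" using lt nab i unfolding sw_def by (auto split: if_splits)
  qed
  show ?thesis unfolding eq lin_ext_def mem_Collect_eq using d' s' o' by (intro conjI)
qed

lemma tau_bij:
  assumes i: "1 \<le> i" "i < n"
  shows "bij_betw (tau R i) (lin_ext n R) (lin_ext n R)"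
  using tau_pres[OF _ i] tau_invol[of i] i lin_ext_length[of _ n R]
  by (intro bij_betw_byWitness[where f'="tau R i"]) auto

lemma foldl_bij:
  assumes "\<forall>i \<in> set is. 1 \<le> i \<and> i < n"
  shows "bij_betw (\<lambda>\<pi>. foldl (\<lambda>\<sigma> i. tau R i \<sigma>) \<pi> is) (lin_ext n R) (lin_ext n R)"
  using assms
proof (induction "is")
  case Nil
  then show ?case by (simp add: bij_betw_id[unfolded id_def])
next
  case (Cons i "is")
  have "bij_betw ((\<lambda>\<pi>. foldl (\<lambda>\<sigma> i. tau R i \<sigma>) \<pi> is) \<circ> tau R i) (lin_ext n R) (lin_ext n R)"
    using Cons tau_bij by (intro bij_betw_trans) auto
  then show ?case by (simp add: comp_def)
qed

lemma promo_bij: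
  assumes "1 \<le> j"
  shows "bij_betw (ext_promo n R j) (lin_ext n R) (lin_ext n R)"
  unfolding ext_promo_def[abs_def] using assms by (intro foldl_bij) auto

lemma lin_ext_finite: "finite (lin_ext n R)"
proof -
  have "lin_ext n R \<subseteq> {xs. set xs \<subseteq> {1..n} \<and> length xs = n}"
    using lin_ext_length unfolding lin_ext_def by auto
  then show ?thesis using finite_lists_length_eq[of "{1..n}" n] finite_subset by blast
qed

lemma unique_pre:
  assumes "1 \<le> j" "\<pi>' \<in> lin_ext n R"
  shows "(\<Sum>\<pi> \<in> lin_ext n R. (if ext_promo n R j \<pi> = \<pi>' then (c::real) else 0)) = c"
proof -
  have b: "bij_betw (ext_promo n R j) (lin_ext n R) (lin_ext n R)" using promo_bij assms by blast
  then obtain p where p: "p \<in> lin_ext n R" "ext_promo n R j p = \<pi>'"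
    using assms by (metis bij_betw_iff_bijections)
  have "{\<pi> \<in> lin_ext n R. ext_promo n R j \<pi> = \<pi>'} = {p}"
    using p b by (auto simp: bij_betw_def inj_on_def)
  then show ?thesis
    by (simp only: sum.inter_filter[OF lin_ext_finite, symmetric]) simp
qed

theorem theorem4p3:
  fixes n :: nat and R :: "nat rel" and x :: "nat \<Rightarrow> real"
  assumes "natural_poset n R"
    and "\<forall>j \<in> {1..n}. x j > 0"
    and "\<pi>' \<in> lin_ext n R"
  shows "(\<Sum>\<pi> \<in> lin_ext n R. trans_matrix n R x \<pi>' \<pi>) = 0"
proof -
  define g where "g \<pi> j = (if ext_promo n R j \<pi> = \<pi>' then x j else 0)" for \<pi> j
  have fin: "finite {1..n::nat}" by simp
  have M: "trans_matrix n R x \<pi>' \<pi> = (\<Sum>j\<in>{1..n}. g \<pi> j) - (if \<pi> = \<pi>' then (\<Sum>j\<in>{1..n}. x j) else 0)" for \<pi>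
  proof (cases "\<pi> = \<pi>'")
    case True
    have "(\<Sum>j\<in>{1..n}. x j) = (\<Sum>j\<in>{j\<in>{1..n}. ext_promo n R j \<pi> = \<pi>}. x j) + (\<Sum>j\<in>{j\<in>{1..n}. ext_promo n R j \<pi> \<noteq> \<pi>}. x j)"
    proof -
      have e: "{1..n} = {j\<in>{1..n}. ext_promo n R j \<pi> = \<pi>} \<union> {j\<in>{1..n}. ext_promo n R j \<pi> \<noteq> \<pi>}" by auto
      show ?thesis by (subst e, rule sum.union_disjoint) auto
    qed
    moreover have "(\<Sum>j\<in>{1..n}. g \<pi> j) = (\<Sum>j\<in>{j\<in>{1..n}. ext_promo n R j \<pi> = \<pi>}. x j)"
      unfolding g_def using True by (simp only: sum.inter_filter[OF fin])
    ultimately show ?thesis using True unfolding trans_matrix_def by simp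
  next
    case False
    then show ?thesis unfolding trans_matrix_def g_def
      by (simp only: sum.inter_filter[OF fin] if_True if_False not_False_eq_True) simp
  qed
  have "(\<Sum>\<pi> \<in> lin_ext n R. trans_matrix n R x \<pi>' \<pi>)
      = (\<Sum>\<pi> \<in> lin_ext n R. \<Sum>j\<in>{1..n}. g \<pi> j) - (\<Sum>\<pi> \<in> lin_ext n R. (if \<pi> = \<pi>' then (\<Sum>j\<in>{1..n}. x j) else 0))"
    by (simp add: M sum_subtractf)
  also have "(\<Sum>\<pi> \<in> lin_ext n R. (if \<pi> = \<pi>' then (\<Sum>j\<in>{1..n}. x j) else 0)) = (\<Sum>j\<in>{1..n}. x j)"
    using assms(3) lin_ext_finite by simp
  also have "(\<Sum>\<pi> \<in> lin_ext n R. \<Sum>j\<in>{1..n}. g \<pi> j) = (\<Sum>j\<in>{1..n}. \<Sum>\<pi> \<in> lin_ext n R. g \<pi> j)"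
    by (rule sum.swap)
  also have "\<dots> = (\<Sum>j\<in>{1..n}. x j)"
    unfolding g_def using unique_pre assms(3) by (intro sum.cong) auto
  finally show ?thesis by simp
qed

end
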